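(* For every integer $n\ge 2$, the origami flip graph ${\rm OFG}(M_{2,n})$ has exactly $8(n+1)3^{n-3}$ edges.
   Context: The $2\times n$ Miura-ori $M_{2,n}$ ($n\ge 1$) has faces $\alpha_{i,j}$ ($i\in\{1,2\}$ row, $j\in\{1,\dots,n\}$ column), interior vertices $x_1,\dots,x_{n-1}$, and creases $e_0$ and $e_{3k-1},e_{3k},e_{3k+1}$ for $k=1,\dots,n-1$. At $x_k$ the incident creases are left $e_{3k-3}$, top $e_{3k-1}$, right $e_{3k}$, bottom $e_{3k+1}$ (the two sector angles adjacent to the left crease are obtuse, the others acute). Face $\alpha_{1,j}$ is bordered by those of $e_{3j-4}$ (iff $j\ge2$), $e_{3j-3}$, $e_{3j-1}$ (iff $j\le n-1$); face $\alpha_{2,j}$ by those of $e_{3j-2}$ (iff $j\ge2$), $e_{3j-3}$, $e_{3j+1}$ (iff $j\le n-1$). An MV assignment is a map $\mu$ from the creases to $\{1,-1\}$ (mountain/valley); it is locally valid if for each $k$ exactly one of $\mu(e_{3k-1}),\mu(e_{3k}),\mu(e_{3k+1})$ differs from $\mu(e_{3k-3})$. The face flip $\mu_\alpha$ negates $\mu$ exactly on the creases bordering face $\alpha$; $\alpha$ is flippable under $\mu$ if $\mu$ and $\mu_\alpha$ are both locally valid. ${\rm OFG}(M_{2,n})$ has the locally valid MV assignments as vertices, with $\mu\sim\mu_\alpha$ for each flippable $\alpha$. *)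

theory Defs
  imports Complex_Main
begin

text \<open>The 2 x n Miura-ori M_{2,n}. Creases e_c are indexed by natural numbers c:
  e_0 and e_{3k-1}, e_{3k}, e_{3k+1} for k = 1..n-1.\<close>

definition creases :: "nat \<Rightarrow> nat set" where
  "creases n = {0} \<union> (\<Union>k\<in>{1..n-1}. {3*k-1, 3*k, 3*k+1})"

definition faces :: "nat \<Rightarrow> (nat \<times> nat) set" where
  "faces n = {1,2} \<times> {1..n}"

definition face_border :: "nat \<Rightarrow> nat \<times> nat \<Rightarrow> nat set" where
  "face_border n f = (case f of (i, j) \<Rightarrow>
     if i = 1 then
       (if 2 \<le> j then {3*j-4} else {}) \<union> {3*j-3} \<union> (if j \<le> n-1 then {3*j-1} else {})
     else
       (if 2 \<le> j then {3*j-2} else {}) \<union> {3*j-3} \<union> (if j \<le> n-1 then {3*j+1} else {}))"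

text \<open>MV assignments: maps from the creases to {1,-1} (extended by 0 outside
  the crease set so that they are determined by their values on the creases).\<close>

definition mv_assignments :: "nat \<Rightarrow> (nat \<Rightarrow> int) set" where
  "mv_assignments n = {\<mu>. (\<forall>c\<in>creases n. \<mu> c \<in> {1, -1}) \<and> (\<forall>c. c \<notin> creases n \<longrightarrow> \<mu> c = 0)}"

text \<open>Local validity: at each interior vertex x_k exactly one of the creases
  e_{3k-1}, e_{3k}, e_{3k+1} has a value different from that of e_{3k-3}.\<close>

definition locally_valid :: "nat \<Rightarrow> (nat \<Rightarrow> int) \<Rightarrow> bool" where
  "locally_valid n \<mu> \<longleftrightarrow> \<mu> \<in> mv_assignments n \<and>
     (\<forall>k\<in>{1..n-1}. card {c \<in> {3*k-1, 3*k, 3*k+1}. \<mu> c \<noteq> \<mu> (3*k-3)} = 1)"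

definition face_flip :: "nat \<Rightarrow> (nat \<Rightarrow> int) \<Rightarrow> nat \<times> nat \<Rightarrow> (nat \<Rightarrow> int)" where
  "face_flip n \<mu> f = (\<lambda>c. if c \<in> face_border n f then - \<mu> c else \<mu> c)"

definition flippable :: "nat \<Rightarrow> (nat \<Rightarrow> int) \<Rightarrow> nat \<times> nat \<Rightarrow> bool" where
  "flippable n \<mu> f \<longleftrightarrow> f \<in> faces n \<and> locally_valid n \<mu> \<and> locally_valid n (face_flip n \<mu> f)"

definition OFG_vertices :: "nat \<Rightarrow> (nat \<Rightarrow> int) set" where
  "OFG_vertices n = {\<mu>. locally_valid n \<mu>}"

definition OFG_edges :: "nat \<Rightarrow> (nat \<Rightarrow> int) set set" where
  "OFG_edges n = {{\<mu>, face_flip n \<mu> f} | \<mu> f. flippable n \<mu> f}"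

end

theory Submission
  imports Defs "HOL-Library.FuncSet"
begin

lemma creases_eq: "creases n = {c. c = 0 \<or> (2 \<le> c \<and> c + 2 \<le> 3*n)}"
proof (rule set_eqI, rule iffI)
  fix c assume "c \<in> creases n"
  then show "c \<in> {c. c = 0 \<or> (2 \<le> c \<and> c + 2 \<le> 3*n)}"
    unfolding creases_def by auto
next
  fix c assume "c \<in> {c. c = 0 \<or> (2 \<le> c \<and> c + 2 \<le> 3*n)}"
  then have h: "c = 0 \<or> (2 \<le> c \<and> c + 2 \<le> 3*n)" by simp
  show "c \<in> creases n"
  proof (cases "c = 0")
    case True then show ?thesis unfolding creases_def by simp
  next
    case False
    with h have c: "2 \<le> c" "c + 2 \<le> 3*n" by auto
    define k where "k = (c+1) div 3"
    have k1: "k \<in> {1..n-1}" using c unfolding k_def by auto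
    have "c \<in> {3*k-1, 3*k, 3*k+1}" unfolding k_def using c by auto
    then show ?thesis unfolding creases_def using k1 by blast
  qed
qed

lemma card3_iff:
  assumes "a\<noteq>b" "a\<noteq>c" "b\<noteq>c"
  shows "card {x \<in> {a,b,c}. P x} = 1 \<longleftrightarrow>
    (P a \<and> \<not>P b \<and> \<not>P c) \<or> (\<not>P a \<and> P b \<and> \<not>P c) \<or> (\<not>P a \<and> \<not>P b \<and> P c)"
proof -
  have e: "{x \<in> {a,b,c}. P x} = (if P a then {a} else {}) \<union> (if P b then {b} else {}) \<union> (if P c then {c} else {})"
    by auto
  show ?thesis unfolding e using assms
    by (cases "P a"; cases "P b"; cases "P c"; simp)
qed

definition ex1 :: "int \<Rightarrow> int \<Rightarrow> int \<Rightarrow> int \<Rightarrow> bool" where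
  "ex1 L a b c \<longleftrightarrow> (a\<noteq>L \<and> b=L \<and> c=L) \<or> (a=L \<and> b\<noteq>L \<and> c=L) \<or> (a=L \<and> b=L \<and> c\<noteq>L)"

lemma ball_shift: "(\<forall>v\<in>{1..n-1}. X v) \<longleftrightarrow> (\<forall>q. q + 2 \<le> (n::nat) \<longrightarrow> X (Suc q))"
proof
  assume "\<forall>v\<in>{1..n-1}. X v" then show "\<forall>q. q + 2 \<le> n \<longrightarrow> X (Suc q)" by auto
next
  assume h: "\<forall>q. q + 2 \<le> n \<longrightarrow> X (Suc q)"
  show "\<forall>v\<in>{1..n-1}. X v"
  proof
    fix v assume "v \<in> {1..n-1}"
    then have "v - 1 + 2 \<le> n" "Suc (v-1) = v" by auto
    then show "X v" using h by metis
  qed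
qed

lemma lv_iff: "locally_valid n \<mu> \<longleftrightarrow> \<mu> \<in> mv_assignments n \<and>
   (\<forall>q. q + 2 \<le> n \<longrightarrow> ex1 (\<mu> (3*q)) (\<mu> (3*q+2)) (\<mu> (3*q+3)) (\<mu> (3*q+4)))"
proof -
  have "(\<forall>k\<in>{1..n-1}. card {c \<in> {3*k-1, 3*k, 3*k+1}. \<mu> c \<noteq> \<mu> (3*k-3)} = 1)
     \<longleftrightarrow> (\<forall>q. q + 2 \<le> n \<longrightarrow> card {c \<in> {3*Suc q-1, 3*Suc q, 3*Suc q+1}. \<mu> c \<noteq> \<mu> (3*Suc q-3)} = 1)"
    by (rule ball_shift)
  also have "\<dots> \<longleftrightarrow> (\<forall>q. q + 2 \<le> n \<longrightarrow> ex1 (\<mu> (3*q)) (\<mu> (3*q+2)) (\<mu> (3*q+3)) (\<mu> (3*q+4)))"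
  proof -
    have "card {c \<in> {3*Suc q-1, 3*Suc q, 3*Suc q+1}. \<mu> c \<noteq> \<mu> (3*Suc q-3)} = 1 \<longleftrightarrow>
          ex1 (\<mu> (3*q)) (\<mu> (3*q+2)) (\<mu> (3*q+3)) (\<mu> (3*q+4))" for q
    proof -
      have e: "3*q+3-1 = 3*q+2" "3*Suc q = 3*q+3" "3*q+3+1 = 3*q+4" "3*q+3-3 = 3*q" by auto
      have g: "card {c\<in>{a,b,d}. \<mu> c \<noteq> L} = 1 \<longleftrightarrow> ex1 L (\<mu> a) (\<mu> b) (\<mu> d)"
        if "a\<noteq>b" "a\<noteq>d" "b\<noteq>d" for a b d L
        using card3_iff[OF that, of "\<lambda>c. \<mu> c \<noteq> L"] unfolding ex1_def by blast
      have "card {c \<in> {3*Suc q-1, 3*Suc q, 3*Suc q+1}. \<mu> c \<noteq> \<mu> (3*Suc q-3)} = 1 \<longleftrightarrow>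
          ex1 (\<mu> (3*Suc q-3)) (\<mu> (3*Suc q-1)) (\<mu> (3*Suc q)) (\<mu> (3*Suc q+1))"
        by (rule g) auto
      then show ?thesis by (simp only: e)
    qed
    then show ?thesis by simp
  qed
  finally show ?thesis unfolding locally_valid_def by simp
qed

definition sg :: "bool \<Rightarrow> int" where "sg b = (if b then -1 else 1)"

definition PP :: "int \<Rightarrow> (nat \<Rightarrow> nat) \<Rightarrow> nat \<Rightarrow> int" where
  "PP s t k = s * (\<Prod>i\<in>{1..k}. sg (t i = 1))"

definition build :: "nat \<Rightarrow> int \<Rightarrow> (nat \<Rightarrow> nat) \<Rightarrow> nat \<Rightarrow> int" where
  "build n s t c = (if c \<in> creases n then
     (if c mod 3 = 0 then PP s t (c div 3)
      else if c mod 3 = 2 then PP s t (c div 3) * sg (t (c div 3 + 1) = 0)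
      else PP s t (c div 3 - 1) * sg (t (c div 3) = 2)) else 0)"

definition code :: "int \<Rightarrow> int \<Rightarrow> int \<Rightarrow> nat" where
  "code L a b = (if a \<noteq> L then 0 else if b \<noteq> L then 1 else 2)"

definition dec :: "nat \<Rightarrow> (nat \<Rightarrow> int) \<Rightarrow> nat \<Rightarrow> nat" where
  "dec n \<mu> = (\<lambda>v\<in>{1..n-1}. code (\<mu> (3*(v-1))) (\<mu> (3*(v-1)+2)) (\<mu> (3*(v-1)+3)))"

definition TT :: "nat \<Rightarrow> (nat \<Rightarrow> nat) set" where
  "TT n = PiE {1..n-1} (\<lambda>_. {0,1,2})"

lemma PP_0[simp]: "PP s t 0 = s"
  by (simp add: PP_def)

lemma PP_Suc: "PP s t (Suc k) = PP s t k * sg (t (Suc k) = 1)"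
  by (simp add: PP_def prod.nat_ivl_Suc' mult_ac)

lemma sg_pm: "sg b \<in> {1,-1}" by (simp add: sg_def)

lemma PP_pm: "s \<in> {1,-1} \<Longrightarrow> PP s t k \<in> {1,-1}"
  by (induction k) (auto simp: PP_Suc sg_def)

lemma PP_nz: "s \<in> {1,-1} \<Longrightarrow> PP s t k \<noteq> 0"
  using PP_pm[of s t k] by auto

lemma cr0: "q + 1 \<le> n \<Longrightarrow> 3*q \<in> creases n"
  by (auto simp: creases_eq)
lemma cr2: "q + 2 \<le> n \<Longrightarrow> 3*q+2 \<in> creases n"
  by (auto simp: creases_eq)
lemma cr4: "q + 2 \<le> n \<Longrightarrow> 3*q+4 \<in> creases n"
  by (auto simp: creases_eq)

lemma b0: "q + 1 \<le> n \<Longrightarrow> build n s t (3*q) = PP s t q"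
  using cr0[of q n] by (simp add: build_def)
lemma b2: "q + 2 \<le> n \<Longrightarrow> build n s t (3*q+2) = PP s t q * sg (t (Suc q) = 0)"
proof -
  assume "q + 2 \<le> n"
  then have "3*q+2 \<in> creases n" by (rule cr2)
  moreover have "(3*q+2) mod 3 = 2" "(3*q+2) div 3 = q" by presburger+
  ultimately show ?thesis by (simp only: build_def if_True) simp
qed
lemma b3: "q + 2 \<le> n \<Longrightarrow> build n s t (3*q+3) = PP s t (Suc q)"
proof -
  assume "q + 2 \<le> n"
  then have "build n s t (3*Suc q) = PP s t (Suc q)" by (intro b0) simp
  moreover have "3*Suc q = 3*q+3" by simp
  ultimately show ?thesis by metis
qed
lemma b4: "q + 2 \<le> n \<Longrightarrow> build n s t (3*q+4) = PP s t q * sg (t (Suc q) = 2)"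
proof -
  assume "q + 2 \<le> n"
  then have "3*q+4 \<in> creases n" by (rule cr4)
  moreover have "(3*q+4) mod 3 = 1" "(3*q+4) div 3 = Suc q" by presburger+
  ultimately show ?thesis by (simp only: build_def if_True) simp
qed
lemma bout: "c \<notin> creases n \<Longrightarrow> build n s t c = 0"
  by (simp add: build_def)

lemma ex1_sg: "L \<noteq> 0 \<Longrightarrow> (x::nat) \<in> {0,1,2} \<Longrightarrow> ex1 L (L*sg(x=0)) (L*sg(x=1)) (L*sg(x=2))"
  by (auto simp: ex1_def sg_def)

lemma code_sg: "L \<noteq> 0 \<Longrightarrow> (x::nat) \<in> {0,1,2} \<Longrightarrow> code L (L*sg(x=0)) (L*sg(x=1)) = x"
  by (auto simp: code_def sg_def)

lemma ex1_code: "L \<in> {1,-1} \<Longrightarrow> a \<in> {1,-1} \<Longrightarrow> b \<in> {1,-1} \<Longrightarrow> c \<in> {1,-1} \<Longrightarrow> ex1 L a b c \<Longrightarrow>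
  a = L*sg(code L a b = 0) \<and> b = L*sg(code L a b = 1) \<and> c = L*sg(code L a b = 2) \<and> code L a b \<in> {0,1,2}"
  by (auto simp: ex1_def sg_def code_def)

lemma dec_Suc: "q + 2 \<le> n \<Longrightarrow> dec n \<mu> (Suc q) = code (\<mu> (3*q)) (\<mu> (3*q+2)) (\<mu> (3*q+3))"
proof -
  assume "q + 2 \<le> n"
  then have "Suc q \<in> {1..n-1}" by auto
  then show ?thesis unfolding dec_def by (simp only: restrict_apply' diff_Suc_1)
qed

lemma TT_mem: "t \<in> TT n \<Longrightarrow> q + 2 \<le> n \<Longrightarrow> t (Suc q) \<in> {0,1,2}"
proof -
  assume t: "t \<in> TT n" and q: "q + 2 \<le> n"
  then have "Suc q \<in> {1..n-1}" by auto
  then show ?thesis using PiE_mem[OF t[unfolded TT_def]] by blast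
qed

lemma mv_pm: "\<mu> \<in> mv_assignments n \<Longrightarrow> c \<in> creases n \<Longrightarrow> \<mu> c \<in> {1,-1}"
  by (simp add: mv_assignments_def)

lemma mv_out: "\<mu> \<in> mv_assignments n \<Longrightarrow> c \<notin> creases n \<Longrightarrow> \<mu> c = 0"
  by (simp add: mv_assignments_def)

lemma build_valid:
  assumes s: "s \<in> {1,-1}" and t: "t \<in> TT n"
  shows "locally_valid n (build n s t)"
  unfolding lv_iff
proof (intro conjI allI impI)
  show "build n s t \<in> mv_assignments n"
    unfolding mv_assignments_def
  proof (intro CollectI conjI ballI allI impI)
    fix c assume c: "c \<in> creases n"
    have "PP s t k * sg b \<in> {1,-1}" for k b
      using PP_pm[OF s, of t k] sg_pm[of b] by auto
    then show "build n s t c \<in> {1,-1}"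
      using PP_pm[OF s] c by (simp add: build_def)
  qed (simp add: build_def)
next
  fix q assume q: "q + 2 \<le> n"
  have tq: "t (Suc q) \<in> {0,1,2}" using TT_mem[OF t q] .
  show "ex1 (build n s t (3*q)) (build n s t (3*q+2)) (build n s t (3*q+3)) (build n s t (3*q+4))"
    using q b0[of q n] b2[OF q] b3[OF q] b4[OF q] ex1_sg[OF PP_nz[OF s] tq]
    by (simp add: PP_Suc)
qed

lemma dec_build:
  assumes s: "s \<in> {1,-1}" and t: "t \<in> TT n"
  shows "dec n (build n s t) = t"
proof (rule ext)
  fix v
  show "dec n (build n s t) v = t v"
  proof (cases "v \<in> {1..n-1}")
    case True
    define q where "q = v - 1"
    have v: "v = Suc q" and q: "q + 2 \<le> n" using True unfolding q_def by auto
    have tq: "t (Suc q) \<in> {0,1,2}" using TT_mem[OF t q] .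
    show ?thesis unfolding v dec_Suc[OF q]
      using q b0[of q n] b2[OF q] b3[OF q] code_sg[OF PP_nz[OF s] tq]
      by (simp add: PP_Suc)
  next
    case False
    then show ?thesis using t unfolding dec_def TT_def by (auto simp: PiE_def extensional_def)
  qed
qed

lemma build_0: "build n s t 0 = s"
  using b0[of 0 n s t] by (simp add: build_def creases_def)

lemma cr3: "q + 2 \<le> n \<Longrightarrow> 3*q+3 \<in> creases n"
  by (auto simp: creases_eq)

lemma dec_TT: "dec n \<mu> \<in> TT n"
  unfolding dec_def TT_def by (auto simp: code_def)

lemma valid_build:
  assumes lv: "locally_valid n \<mu>" and n1: "1 \<le> n"
  shows "build n (\<mu> 0) (dec n \<mu>) = \<mu>"
proof -
  have mv: "\<mu> \<in> mv_assignments n" and ex: "\<And>q. q + 2 \<le> n \<Longrightarrow> ex1 (\<mu> (3*q)) (\<mu> (3*q+2)) (\<mu> (3*q+3)) (\<mu> (3*q+4))"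
    using lv unfolding lv_iff by auto
  have E: "\<mu> (3*q+2) = \<mu> (3*q) * sg (dec n \<mu> (Suc q) = 0) \<and> \<mu> (3*q+3) = \<mu> (3*q) * sg (dec n \<mu> (Suc q) = 1)
     \<and> \<mu> (3*q+4) = \<mu> (3*q) * sg (dec n \<mu> (Suc q) = 2)" if q: "q + 2 \<le> n" for q
    unfolding dec_Suc[OF q]
    using ex1_code[OF mv_pm[OF mv cr0] mv_pm[OF mv cr2[OF q]] mv_pm[OF mv cr3[OF q]] mv_pm[OF mv cr4[OF q]] ex[OF q]] q
    by auto
  have P: "q + 1 \<le> n \<Longrightarrow> \<mu> (3*q) = PP (\<mu> 0) (dec n \<mu>) q" for q
  proof (induction q)
    case 0 then show ?case by simp
  next
    case (Suc q)
    then have q: "q + 2 \<le> n" by simp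
    have "\<mu> (3*Suc q) = \<mu> (3*q+3)" by (simp add: add.commute)
    also have "\<dots> = \<mu> (3*q) * sg (dec n \<mu> (Suc q) = 1)" using E[OF q] by simp
    also have "\<dots> = PP (\<mu> 0) (dec n \<mu>) (Suc q)" using Suc q by (simp add: PP_Suc)
    finally show ?case .
  qed
  show ?thesis
  proof (rule ext)
    fix c
    show "build n (\<mu> 0) (dec n \<mu>) c = \<mu> c"
    proof (cases "c \<in> creases n")
      case False
      then show ?thesis using bout mv_out[OF mv] by simp
    next
      case True
      then have c: "c = 0 \<or> (2 \<le> c \<and> c + 2 \<le> 3*n)" by (simp add: creases_eq)
      define q where "q = c div 3"
      have "c mod 3 = 0 \<or> c mod 3 = 1 \<or> c mod 3 = 2" by presburger
      moreover
      { assume "c mod 3 = 0"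
        then have cq: "c = 3*q" and q: "q + 1 \<le> n" using c n1 unfolding q_def by presburger+
        have ?thesis unfolding cq b0[OF q] P[OF q] .. }
      moreover
      { assume "c mod 3 = 2"
        then have cq: "c = 3*q+2" and q: "q + 2 \<le> n" using c unfolding q_def by presburger+
        have ?thesis unfolding cq b2[OF q] using E[OF q] P[of q] q by simp }
      moreover
      { assume "c mod 3 = 1"
        then have cq: "c = 3*(q-1)+4" and q: "(q-1) + 2 \<le> n" and q1: "Suc (q-1) = q" using c unfolding q_def by presburger+
        have ?thesis unfolding cq b4[OF q] using E[OF q] P[of "q-1"] q by simp }
      ultimately show ?thesis by metis
    qed
  qed
qed

lemma fb_mem: "1 \<le> j \<Longrightarrow> c \<in> face_border n (i,j) \<longleftrightarrow>
  (if i = 1 then (2 \<le> j \<and> c+4 = 3*j) \<or> c+3 = 3*j \<or> (j+1 \<le> n \<and> c+1 = 3*j)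
   else (2 \<le> j \<and> c+2 = 3*j) \<or> c+3 = 3*j \<or> (j+1 \<le> n \<and> c = 3*j+1))"
  unfolding face_border_def by auto

lemma fb_sub: "(i,j) \<in> faces n \<Longrightarrow> face_border n (i,j) \<subseteq> creases n"
proof
  fix c assume f: "(i,j) \<in> faces n" and c: "c \<in> face_border n (i,j)"
  have j: "1 \<le> j" "j \<le> n" using f by (auto simp: faces_def)
  show "c \<in> creases n" using c unfolding fb_mem[OF j(1)] creases_eq using j
    by (cases "i = 1") (simp; presburger)+
qed

lemma fb_q:
  assumes j: "1 \<le> j" and q: "q + 2 \<le> n"
  shows "3*q \<in> face_border n (i,j) \<longleftrightarrow> q+1 = j"
    "3*q+2 \<in> face_border n (i,j) \<longleftrightarrow> i = 1 \<and> (q+2 = j \<or> q+1 = j)"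
    "3*q+3 \<in> face_border n (i,j) \<longleftrightarrow> q+2 = j"
    "3*q+4 \<in> face_border n (i,j) \<longleftrightarrow> i \<noteq> 1 \<and> (q+2 = j \<or> q+1 = j)"
  unfolding fb_mem[OF j] using j q by (cases "i = 1"; simp; presburger)+

definition condm :: "nat \<Rightarrow> (nat \<Rightarrow> int) \<Rightarrow> nat \<Rightarrow> nat \<Rightarrow> bool" where
  "condm n \<mu> i j \<longleftrightarrow> (\<forall>q. q + 2 \<le> n \<longrightarrow>
     (q+2 = j \<longrightarrow> (if i = 1 then \<mu> (3*q+4) = \<mu> (3*q) else \<mu> (3*q+2) = \<mu> (3*q))) \<and>
     (q+1 = j \<longrightarrow> (if i = 1 then \<mu> (3*q+2) = \<mu> (3*q) else \<mu> (3*q+4) = \<mu> (3*q))))"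

lemma ex1_flips:
  assumes "L \<in> {1,-1}" "a \<in> {1,-1}" "b \<in> {1,-1}" "c \<in> {1,-1}" "ex1 L a b c"
  shows "ex1 L (-a) (-b) c \<longleftrightarrow> c = L" "ex1 (-L) (-a) b c \<longleftrightarrow> a = L"
    "ex1 L a (-b) (-c) \<longleftrightarrow> a = L" "ex1 (-L) a b (-c) \<longleftrightarrow> c = L"
  using assms by (auto simp: ex1_def)

lemma flip_vertex:
  assumes lv: "locally_valid n \<mu>" and f: "(i,j) \<in> faces n" and q: "q + 2 \<le> n"
  shows "ex1 (face_flip n \<mu> (i,j) (3*q)) (face_flip n \<mu> (i,j) (3*q+2)) (face_flip n \<mu> (i,j) (3*q+3)) (face_flip n \<mu> (i,j) (3*q+4))
    \<longleftrightarrow> (q+2 = j \<longrightarrow> (if i = 1 then \<mu> (3*q+4) = \<mu> (3*q) else \<mu> (3*q+2) = \<mu> (3*q))) \<and>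
     (q+1 = j \<longrightarrow> (if i = 1 then \<mu> (3*q+2) = \<mu> (3*q) else \<mu> (3*q+4) = \<mu> (3*q)))"
proof -
  have mv: "\<mu> \<in> mv_assignments n" and ex: "ex1 (\<mu> (3*q)) (\<mu> (3*q+2)) (\<mu> (3*q+3)) (\<mu> (3*q+4))"
    using lv q unfolding lv_iff by auto
  have j: "1 \<le> j" using f by (auto simp: faces_def)
  have i: "i = 1 \<or> i = 2" using f by (auto simp: faces_def)
  obtain L a b c where defs: "\<mu> (3*q) = L" "\<mu> (3*q+2) = a" "\<mu> (3*q+3) = b" "\<mu> (3*q+4) = c" by blast
  have pms: "L \<in> {1,-1}" "a \<in> {1,-1}" "b \<in> {1,-1}" "c \<in> {1,-1}"
    using mv_pm[OF mv cr0[of q n]] mv_pm[OF mv cr2[OF q]] mv_pm[OF mv cr3[OF q]] mv_pm[OF mv cr4[OF q]] q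
    unfolding defs by auto
  have ex': "ex1 L a b c" using ex unfolding defs .
  have fv: "face_flip n \<mu> (i,j) (3*q) = (if q+1 = j then -L else L)"
     "face_flip n \<mu> (i,j) (3*q+2) = (if i = 1 \<and> (q+2 = j \<or> q+1 = j) then -a else a)"
     "face_flip n \<mu> (i,j) (3*q+3) = (if q+2 = j then -b else b)"
     "face_flip n \<mu> (i,j) (3*q+4) = (if i \<noteq> 1 \<and> (q+2 = j \<or> q+1 = j) then -c else c)"
    unfolding face_flip_def fb_q[OF j q] defs by simp_all
  have "q + 2 = j \<or> q + 1 = j \<or> (q+2 \<noteq> j \<and> q+1 \<noteq> j)" by auto
  then show ?thesis unfolding fv defs
    using i pms ex' by (elim disjE) (auto simp: ex1_def)
qed

lemma flip_mv:
  assumes mv: "\<mu> \<in> mv_assignments n" and f: "(i,j) \<in> faces n"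
  shows "face_flip n \<mu> (i,j) \<in> mv_assignments n"
  using mv fb_sub[OF f] unfolding mv_assignments_def face_flip_def by auto

lemma flip_valid_iff:
  assumes lv: "locally_valid n \<mu>" and f: "(i,j) \<in> faces n"
  shows "locally_valid n (face_flip n \<mu> (i,j)) \<longleftrightarrow> condm n \<mu> i j"
proof -
  have mv: "\<mu> \<in> mv_assignments n" using lv unfolding lv_iff by auto
  show ?thesis unfolding lv_iff[of n "face_flip n \<mu> (i,j)"] condm_def
    using flip_mv[OF mv f] flip_vertex[OF lv f] by auto
qed

definition condt :: "nat \<Rightarrow> nat \<Rightarrow> nat \<Rightarrow> (nat \<Rightarrow> nat) \<Rightarrow> bool" where
  "condt n i j t \<longleftrightarrow> (\<forall>q. q + 2 \<le> n \<longrightarrow>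
     (q+2 = j \<longrightarrow> t (Suc q) \<noteq> (if i = 1 then 2 else 0)) \<and>
     (q+1 = j \<longrightarrow> t (Suc q) \<noteq> (if i = 1 then 0 else 2)))"

lemma sg_eq: "(x::int) \<noteq> 0 \<Longrightarrow> x * sg b = x \<longleftrightarrow> \<not> b"
  by (auto simp: sg_def)

lemma condm_build:
  assumes s: "s \<in> {1,-1}" and t: "t \<in> TT n"
  shows "condm n (build n s t) i j \<longleftrightarrow> condt n i j t"
proof -
  have "((q+2 = j \<longrightarrow> (if i = 1 then build n s t (3*q+4) = build n s t (3*q) else build n s t (3*q+2) = build n s t (3*q))) \<and>
     (q+1 = j \<longrightarrow> (if i = 1 then build n s t (3*q+2) = build n s t (3*q) else build n s t (3*q+4) = build n s t (3*q))))
    \<longleftrightarrow> ((q+2 = j \<longrightarrow> t (Suc q) \<noteq> (if i = 1 then 2 else 0)) \<and>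
     (q+1 = j \<longrightarrow> t (Suc q) \<noteq> (if i = 1 then 0 else 2)))" if q: "q + 2 \<le> n" for q
  proof -
    have q1: "q + 1 \<le> n" using q by simp
    show ?thesis unfolding b0[OF q1] b2[OF q] b4[OF q] using sg_eq[OF PP_nz[OF s]] by auto
  qed
  then show ?thesis unfolding condm_def condt_def by blast
qed

definition Aset :: "nat \<Rightarrow> nat \<Rightarrow> nat \<Rightarrow> (nat \<Rightarrow> int) set" where
  "Aset n i j = {\<mu>. locally_valid n \<mu> \<and> condm n \<mu> i j \<and> \<mu> (3*j-3) = 1}"

definition Sset :: "nat \<Rightarrow> nat \<Rightarrow> nat \<Rightarrow> (int \<times> (nat \<Rightarrow> nat)) set" where
  "Sset n i j = {(s,t). s \<in> {1,-1} \<and> t \<in> TT n \<and> condt n i j t \<and> PP s t (j-1) = 1}"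

lemma build_j: "1 \<le> j \<Longrightarrow> j \<le> n \<Longrightarrow> build n s t (3*j-3) = PP s t (j-1)"
  using b0[of "j-1" n s t] by (simp add: diff_mult_distrib2)

lemma A_eq:
  assumes n: "1 \<le> n" and j: "1 \<le> j" "j \<le> n"
  shows "Aset n i j = (\<lambda>(s,t). build n s t) ` Sset n i j"
proof (rule set_eqI, rule iffI)
  fix \<mu> assume "\<mu> \<in> Aset n i j"
  then have lv: "locally_valid n \<mu>" and c: "condm n \<mu> i j" and one: "\<mu> (3*j-3) = 1"
    unfolding Aset_def by auto
  have mv: "\<mu> \<in> mv_assignments n" using lv unfolding lv_iff by auto
  have s: "\<mu> 0 \<in> {1,-1}" using mv_pm[OF mv, of 0] by (simp add: creases_def)
  have e: "build n (\<mu> 0) (dec n \<mu>) = \<mu>" by (rule valid_build[OF lv n])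
  have "(\<mu> 0, dec n \<mu>) \<in> Sset n i j"
  proof -
    have cb: "condm n \<mu> i j \<longleftrightarrow> condt n i j (dec n \<mu>)"
      using condm_build[OF s dec_TT[of n \<mu>], of i j] unfolding e .
    have bj: "\<mu> (3*j-3) = PP (\<mu> 0) (dec n \<mu>) (j-1)"
      using build_j[OF j, of "\<mu> 0" "dec n \<mu>"] unfolding e .
    show ?thesis unfolding Sset_def using s dec_TT[of n \<mu>] cb c one bj by auto
  qed
  then show "\<mu> \<in> (\<lambda>(s,t). build n s t) ` Sset n i j" using e by force
next
  fix \<mu> assume "\<mu> \<in> (\<lambda>(s,t). build n s t) ` Sset n i j"
  then obtain s t where st: "(s,t) \<in> Sset n i j" and mu: "\<mu> = build n s t" by auto
  have s: "s \<in> {1,-1}" and t: "t \<in> TT n" and c: "condt n i j t" and one: "PP s t (j-1) = 1"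
    using st unfolding Sset_def by auto
  show "\<mu> \<in> Aset n i j" unfolding Aset_def mu
    using build_valid[OF s t] condm_build[OF s t] c one build_j[OF j] by auto
qed

lemma inj_build: "inj_on (\<lambda>(s,t). build n s t) (Sset n i j)"
proof (rule inj_onI)
  fix x y assume x: "x \<in> Sset n i j" and y: "y \<in> Sset n i j" and e: "(\<lambda>(s,t). build n s t) x = (\<lambda>(s,t). build n s t) y"
  obtain s t where xs: "x = (s,t)" by fastforce
  obtain s' t' where ys: "y = (s',t')" by fastforce
  have "s \<in> {1,-1}" "t \<in> TT n" "s' \<in> {1,-1}" "t' \<in> TT n" using x y xs ys unfolding Sset_def by auto
  then have "dec n (build n s t) = t" "dec n (build n s' t') = t'" "build n s t 0 = s" "build n s' t' 0 = s'"
    using dec_build build_0 by auto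
  then show "x = y" using e xs ys by auto
qed

lemma PP_mult: "PP s t k = s * PP 1 t k"
  by (simp add: PP_def)

lemma S_eq: "Sset n i j = (\<lambda>t. (PP 1 t (j-1), t)) ` {t \<in> TT n. condt n i j t}"
proof (rule set_eqI, rule iffI)
  fix x assume "x \<in> Sset n i j"
  then obtain s t where x: "x = (s,t)" and s: "s \<in> {1,-1}" and t: "t \<in> TT n" "condt n i j t" and one: "PP s t (j-1) = 1"
    unfolding Sset_def by auto
  have "s = PP 1 t (j-1)" using one s PP_pm[of 1 t "j-1"] unfolding PP_mult[of s] by auto
  then show "x \<in> (\<lambda>t. (PP 1 t (j-1), t)) ` {t \<in> TT n. condt n i j t}" using x t by auto
next
  fix x assume "x \<in> (\<lambda>t. (PP 1 t (j-1), t)) ` {t \<in> TT n. condt n i j t}"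
  then obtain t where x: "x = (PP 1 t (j-1), t)" and t: "t \<in> TT n" "condt n i j t" by auto
  have pm: "PP 1 t (j-1) \<in> {1,-1}" using PP_pm[of 1 t "j-1"] by simp
  have "PP (PP 1 t (j-1)) t (j-1) = 1" using pm unfolding PP_mult[of "PP 1 t (j-1)"] by auto
  then show "x \<in> Sset n i j" unfolding Sset_def using x t pm by auto
qed

definition Bs :: "nat \<Rightarrow> nat \<Rightarrow> nat \<Rightarrow> nat set" where
  "Bs i j v = {0,1,2} - (if v+1 = j then {if i = 1 then 2 else 0} else {}) - (if v = j then {if i = 1 then 0 else 2} else {})"

lemma condt_PiE: "{t \<in> TT n. condt n i j t} = PiE {1..n-1} (Bs i j)"
proof -
  have c: "condt n i j t \<longleftrightarrow> (\<forall>v\<in>{1..n-1}. (v+1 = j \<longrightarrow> t v \<noteq> (if i = 1 then 2 else 0)) \<and>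
     (v = j \<longrightarrow> t v \<noteq> (if i = 1 then 0 else 2)))" for t
    unfolding condt_def ball_shift by simp
  have bs: "x \<in> Bs i j v \<longleftrightarrow> x \<in> {0,1,2} \<and> ((v+1 = j \<longrightarrow> x \<noteq> (if i = 1 then 2 else 0)) \<and>
     (v = j \<longrightarrow> x \<noteq> (if i = 1 then 0 else 2)))" for x v
    unfolding Bs_def by auto
  show ?thesis
  proof (rule set_eqI)
    fix t
    have "t \<in> {t \<in> TT n. condt n i j t} \<longleftrightarrow> t \<in> extensional {1..n-1} \<and> (\<forall>v\<in>{1..n-1}. t v \<in> {0,1,2}) \<and>
      (\<forall>v\<in>{1..n-1}. (v+1 = j \<longrightarrow> t v \<noteq> (if i = 1 then 2 else 0)) \<and> (v = j \<longrightarrow> t v \<noteq> (if i = 1 then 0 else 2)))"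
      unfolding mem_Collect_eq TT_def PiE_iff c by blast
    also have "\<dots> \<longleftrightarrow> t \<in> extensional {1..n-1} \<and> (\<forall>v\<in>{1..n-1}. t v \<in> Bs i j v)"
      unfolding bs by blast
    also have "\<dots> \<longleftrightarrow> t \<in> PiE {1..n-1} (Bs i j)" unfolding PiE_iff by blast
    finally show "t \<in> {t \<in> TT n. condt n i j t} \<longleftrightarrow> t \<in> PiE {1..n-1} (Bs i j)" .
  qed
qed



lemma card_Bs: "card (Bs i j v) = (if v+1 = j \<or> v = j then 2 else 3)"
proof -
  have c3: "card {0,1,2::nat} = 3" by simp
  have m: "(if i = 1 then 2 else 0) \<in> {0,1,2::nat}" "(if i = 1 then 0 else 2) \<in> {0,1,2::nat}" by auto
  show ?thesis
  proof (cases "v+1 = j")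
    case True
    then have "v \<noteq> j" by simp
    then have "Bs i j v = {0,1,2} - {if i = 1 then 2 else 0}" unfolding Bs_def using True by simp
    then show ?thesis using True card_Diff_singleton[OF m(1)] c3 by simp
  next
    case False
    show ?thesis
    proof (cases "v = j")
      case True
      then have "Bs i j v = {0,1,2} - {if i = 1 then 0 else 2}" unfolding Bs_def using False by simp
      then show ?thesis using True card_Diff_singleton[OF m(2)] c3 by simp
    next
      case False2: False
      then have "Bs i j v = {0,1,2}" unfolding Bs_def using False by simp
      then show ?thesis using False False2 c3 by simp
    qed
  qed
qed

lemma card_cond: "card {t \<in> TT n. condt n i j t} = (\<Prod>v\<in>{1..n-1}. (if v+1 = j \<or> v = j then 2 else 3))"
proof -
  have "card (PiE {1..n-1} (Bs i j)) = (\<Prod>v\<in>{1..n-1}. card (Bs i j v))" by (rule card_PiE) simp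
  then show ?thesis unfolding condt_PiE card_Bs .
qed

lemma prod_val:
  assumes n: "2 \<le> n" and j: "1 \<le> j" "j \<le> n"
  shows "3 * (\<Prod>v\<in>{1..n-1}. (if v+1 = j \<or> v = j then 2 else 3::nat)) = (if j = 1 \<or> j = n then 6*3^(n-2) else 4*3^(n-2))"
proof -
  define A where "A = {1..n-1}"
  define X where "X = A \<inter> {v. v+1 = j \<or> v = j}"
  have fA: "finite A" unfolding A_def by simp
  have cA: "card A = n - 1" unfolding A_def by simp
  have XA: "X \<subseteq> A" unfolding X_def by auto
  have fX: "finite X" using XA fA finite_subset by blast
  have AX: "A \<inter> - {v. v+1 = j \<or> v = j} = A - X" unfolding X_def by auto
  have "(\<Prod>v\<in>A. (if v+1 = j \<or> v = j then 2 else 3::nat)) = 2 ^ card X * 3 ^ (card A - card X)"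
  proof -
    have "(\<Prod>v\<in>A. (if v+1 = j \<or> v = j then 2 else 3::nat)) = (\<Prod>v\<in>X. 2) * (\<Prod>v\<in>A - X. 3)"
      unfolding prod.If_cases[OF fA] AX by (simp add: X_def)
    then show ?thesis using card_Diff_subset[OF fX XA] by simp
  qed
  moreover have "X = (if j = 1 then {1} else if j = n then {n-1} else {j-1, j})"
    unfolding X_def A_def using n j by auto
  ultimately have e: "(\<Prod>v\<in>A. (if v+1 = j \<or> v = j then 2 else 3::nat)) =
     (if j = 1 \<or> j = n then 2 * 3^(n-2) else 4 * 3^(n-3))"
    using n j cA by (auto simp: numeral_eq_Suc)
  show ?thesis
  proof (cases "j = 1 \<or> j = n")
    case True then show ?thesis using e unfolding A_def by simp
  next
    case False
    then have "n - 2 = Suc (n - 3)" using j n by auto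
    then show ?thesis using e False unfolding A_def by simp
  qed
qed

lemma sum_val:
  assumes n: "2 \<le> n"
  shows "(\<Sum>j\<in>{1..n}. (if j = 1 \<or> j = n then 6*X else 4*X::nat)) = 4*(n+1)*X"
proof -
  have fA: "finite {1..n}" by simp
  have e1: "{1..n} \<inter> {j. j = 1 \<or> j = n} = {1,n}" using n by auto
  have e2: "{1..n} \<inter> - {j. j = 1 \<or> j = n} = {1..n} - {1,n}" by auto
  have c: "card ({1..n} - {1,n}) = n - 2" using n by (subst card_Diff_subset) auto
  have c2: "card {1,n} = 2" using n by auto
  show ?thesis unfolding sum.If_cases[OF fA] e1 e2 using c c2 n
    by (simp add: algebra_simps)
qed

lemma card_A:
  assumes n: "2 \<le> n" and j: "1 \<le> j" "j \<le> n"
  shows "3 * card (Aset n i j) = (if j = 1 \<or> j = n then 6*3^(n-2) else 4*3^(n-2))"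
proof -
  have n1: "1 \<le> n" using n by simp
  have "card (Aset n i j) = card (Sset n i j)"
    unfolding A_eq[OF n1 j] by (rule card_image[OF inj_build])
  also have "\<dots> = card {t \<in> TT n. condt n i j t}"
    unfolding S_eq by (rule card_image) (auto intro: inj_onI)
  finally show ?thesis using prod_val[OF n j] card_cond by simp
qed

lemma finite_A:
  assumes n: "1 \<le> n" and j: "1 \<le> j" "j \<le> n"
  shows "finite (Aset n i j)"
proof -
  have "finite (TT n)" unfolding TT_def by (simp add: finite_PiE)
  then have "finite (Sset n i j)" unfolding S_eq by simp
  then show ?thesis unfolding A_eq[OF n j] by simp
qed

definition Dp :: "nat \<Rightarrow> ((nat \<Rightarrow> int) \<times> (nat \<times> nat)) set" where
  "Dp n = {(\<mu>,f). flippable n \<mu> f \<and> \<mu> (3 * snd f - 3) = 1}"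

lemma Dp_eq: "Dp n = (\<lambda>(f,\<mu>). (\<mu>,f)) ` (SIGMA f:faces n. Aset n (fst f) (snd f))"
proof -
  have "flippable n \<mu> (i,j) \<longleftrightarrow> (i,j) \<in> faces n \<and> locally_valid n \<mu> \<and> condm n \<mu> i j" for \<mu> i j
    unfolding flippable_def using flip_valid_iff by blast
  then have "(\<mu>,(i,j)) \<in> Dp n \<longleftrightarrow> ((i,j),\<mu>) \<in> (SIGMA f:faces n. Aset n (fst f) (snd f))" for \<mu> i j
    unfolding Dp_def Aset_def by auto
  then have "x \<in> Dp n \<longleftrightarrow> (snd x, fst x) \<in> (SIGMA f:faces n. Aset n (fst f) (snd f))" for x
    by (cases x) auto
  moreover have "(\<lambda>(f,\<mu>). (\<mu>,f)) ` S = {x. (snd x, fst x) \<in> S}" for S :: "((nat \<times> nat) \<times> (nat \<Rightarrow> int)) set"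
    by force
  ultimately show ?thesis by auto
qed

lemma card_Dp:
  assumes n: "2 \<le> n"
  shows "3 * card (Dp n) = 8 * (n+1) * 3^(n-2)"
proof -
  have "card (Dp n) = card (SIGMA f:faces n. Aset n (fst f) (snd f))"
    unfolding Dp_eq by (rule card_image) (auto intro: inj_onI)
  also have "\<dots> = (\<Sum>f\<in>faces n. card (Aset n (fst f) (snd f)))"
    by (rule card_SigmaI) (auto simp: faces_def intro!: finite_A)
  finally have "3 * card (Dp n) = (\<Sum>f\<in>faces n. 3 * card (Aset n (fst f) (snd f)))"
    by (simp add: sum_distrib_left)
  also have "\<dots> = (\<Sum>f\<in>faces n. (if snd f = 1 \<or> snd f = n then 6*3^(n-2) else 4*3^(n-2)))"
  proof (rule sum.cong[OF refl])
    fix f assume "f \<in> faces n"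
    then obtain i j where fi: "f = (i,j)" and j: "1 \<le> j" "j \<le> n" by (auto simp: faces_def)
    show "3 * card (Aset n (fst f) (snd f)) = (if snd f = 1 \<or> snd f = n then 6*3^(n-2) else 4*3^(n-2))"
      using card_A[OF n j, of i] fi by simp
  qed
  also have "\<dots> = (\<Sum>i\<in>{1,2::nat}. \<Sum>j\<in>{1..n}. (if j = 1 \<or> j = n then 6*3^(n-2) else 4*3^(n-2)))"
    unfolding faces_def sum.cartesian_product by (rule sum.cong) auto
  also have "\<dots> = 2 * (4*(n+1)*3^(n-2))" using sum_val[OF n] by simp
  finally show ?thesis by simp
qed

lemma flip_flip: "face_flip n (face_flip n \<mu> f) f = \<mu>"
  unfolding face_flip_def by auto

lemma flip_border:
  assumes mv: "\<mu> \<in> mv_assignments n" and f: "f \<in> faces n" and g: "g \<in> faces n"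
    and e: "face_flip n (face_flip n \<mu> g) f = \<mu>"
  shows "face_border n f = face_border n g"
proof -
  obtain i j where fi: "f = (i,j)" by fastforce
  obtain i' j' where gi: "g = (i',j')" by fastforce
  have sf: "face_border n f \<subseteq> creases n" using fb_sub f fi by blast
  have sg': "face_border n g \<subseteq> creases n" using fb_sub g gi by blast
  show ?thesis
  proof (rule set_eqI)
    fix c
    have ec: "face_flip n (face_flip n \<mu> g) f c = \<mu> c" using e by simp
    show "c \<in> face_border n f \<longleftrightarrow> c \<in> face_border n g"
    proof (rule ccontr)
      assume h: "\<not> (c \<in> face_border n f \<longleftrightarrow> c \<in> face_border n g)"
      then have cc: "c \<in> creases n" using sf sg' by blast
      have "\<mu> c \<in> {1,-1}" by (rule mv_pm[OF mv cc])
      then show False using ec h unfolding face_flip_def by (auto split: if_splits)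
    qed
  qed
qed

lemma border_inj:
  assumes n: "2 \<le> n" and f: "(i,j) \<in> faces n" and g: "(i',j') \<in> faces n"
    and e: "face_border n (i,j) = face_border n (i',j')"
  shows "(i,j) = (i',j')"
proof -
  have j: "1 \<le> j" "j \<le> n" "i = 1 \<or> i = 2" using f by (auto simp: faces_def)
  have j': "1 \<le> j'" "j' \<le> n" "i' = 1 \<or> i' = 2" using g by (auto simp: faces_def)
  have m: "\<And>c. c \<in> face_border n (i,j) \<longleftrightarrow> c \<in> face_border n (i',j')" using e by simp
  note M = m[unfolded fb_mem[OF j(1)] fb_mem[OF j'(1)]]
  have "j = j'" using M[of "3*j-3"] j j' by (auto split: if_splits; presburger)
  moreover have "i = i'"
  proof (rule ccontr)
    assume ii: "i \<noteq> i'"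
    show False
    proof (cases "2 \<le> j")
      case True
      then show False using M[of "3*j-4"] M[of "3*j-2"] ii j j' \<open>j = j'\<close> by (auto split: if_splits; presburger)
    next
      case False
      then show False using M[of "2"] M[of "4"] ii j j' n \<open>j = j'\<close> by (auto split: if_splits; presburger)
    qed
  qed
  ultimately show ?thesis by simp
qed

lemma edges_eq: "OFG_edges n = (\<lambda>(\<mu>,f). {\<mu>, face_flip n \<mu> f}) ` Dp n"
proof (rule set_eqI, rule iffI)
  fix E assume "E \<in> OFG_edges n"
  then obtain \<mu> f where E: "E = {\<mu>, face_flip n \<mu> f}" and fl: "flippable n \<mu> f"
    unfolding OFG_edges_def by auto
  obtain i j where fi: "f = (i,j)" by fastforce
  have ff: "f \<in> faces n" and lv: "locally_valid n \<mu>" and lv2: "locally_valid n (face_flip n \<mu> f)"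
    using fl unfolding flippable_def by auto
  have j: "1 \<le> j" "j \<le> n" using ff fi by (auto simp: faces_def)
  have mv: "\<mu> \<in> mv_assignments n" using lv unfolding lv_iff by auto
  have cr: "3*j-3 \<in> creases n" using cr0[of "j-1" n] j by (simp add: diff_mult_distrib2)
  have inb: "3*j-3 \<in> face_border n f" unfolding fi fb_mem[OF j(1)] using j by auto
  have pm: "\<mu> (3*j-3) \<in> {1,-1}" by (rule mv_pm[OF mv cr])
  show "E \<in> (\<lambda>(\<mu>,f). {\<mu>, face_flip n \<mu> f}) ` Dp n"
  proof (cases "\<mu> (3*j-3) = 1")
    case True
    then have "(\<mu>, f) \<in> Dp n" unfolding Dp_def using fl fi by simp
    then show ?thesis using E by force
  next
    case False
    then have v: "face_flip n \<mu> f (3*j-3) = 1" using pm inb unfolding face_flip_def by auto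
    have "flippable n (face_flip n \<mu> f) f" unfolding flippable_def flip_flip using ff lv lv2 by simp
    then have "(face_flip n \<mu> f, f) \<in> Dp n" unfolding Dp_def using v fi by simp
    moreover have "E = {face_flip n \<mu> f, face_flip n (face_flip n \<mu> f) f}" unfolding E flip_flip by auto
    ultimately show ?thesis by force
  qed
next
  fix E assume "E \<in> (\<lambda>(\<mu>,f). {\<mu>, face_flip n \<mu> f}) ` Dp n"
  then show "E \<in> OFG_edges n" unfolding OFG_edges_def Dp_def by auto
qed

lemma inj_edges:
  assumes n: "2 \<le> n"
  shows "inj_on (\<lambda>(\<mu>,f). {\<mu>, face_flip n \<mu> f}) (Dp n)"
proof (rule inj_onI)
  fix x y assume x: "x \<in> Dp n" and y: "y \<in> Dp n"
    and e: "(\<lambda>(\<mu>,f). {\<mu>, face_flip n \<mu> f}) x = (\<lambda>(\<mu>,f). {\<mu>, face_flip n \<mu> f}) y"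
  obtain \<mu> i j where xs: "x = (\<mu>,(i,j))" by (cases x) fastforce
  obtain \<nu> i' j' where ys: "y = (\<nu>,(i',j'))" by (cases y) fastforce
  have f: "(i,j) \<in> faces n" and lv: "locally_valid n \<mu>" and one: "\<mu> (3*j-3) = 1"
    using x xs unfolding Dp_def flippable_def by auto
  have g: "(i',j') \<in> faces n" and lv': "locally_valid n \<nu>" and one': "\<nu> (3*j'-3) = 1"
    using y ys unfolding Dp_def flippable_def by auto
  have mv: "\<mu> \<in> mv_assignments n" using lv unfolding lv_iff by auto
  have mv': "\<nu> \<in> mv_assignments n" using lv' unfolding lv_iff by auto
  have E: "{\<mu>, face_flip n \<mu> (i,j)} = {\<nu>, face_flip n \<nu> (i',j')}" using e xs ys by simp
  then have "(\<mu> = \<nu> \<and> face_flip n \<mu> (i,j) = face_flip n \<nu> (i',j')) \<or>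
     (\<mu> = face_flip n \<nu> (i',j') \<and> face_flip n \<mu> (i,j) = \<nu>)"
    by (simp add: doubleton_eq_iff)
  then show "x = y"
  proof (elim disjE conjE)
    assume a: "\<mu> = \<nu>" and b: "face_flip n \<mu> (i,j) = face_flip n \<nu> (i',j')"
    have "face_flip n (face_flip n \<mu> (i',j')) (i,j) = \<mu>" using b a flip_flip by metis
    then have "face_border n (i,j) = face_border n (i',j')" by (rule flip_border[OF mv f g])
    then have "(i,j) = (i',j')" by (rule border_inj[OF n f g])
    then show "x = y" using a xs ys by simp
  next
    assume a: "\<mu> = face_flip n \<nu> (i',j')" and b: "face_flip n \<mu> (i,j) = \<nu>"
    have "face_flip n (face_flip n \<nu> (i',j')) (i,j) = \<nu>" using a b by simp
    then have "face_border n (i,j) = face_border n (i',j')" by (rule flip_border[OF mv' f g])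
    then have ij: "(i,j) = (i',j')" by (rule border_inj[OF n f g])
    have j: "1 \<le> j" "j \<le> n" using f by (auto simp: faces_def)
    have inb: "3*j-3 \<in> face_border n (i,j)" unfolding fb_mem[OF j(1)] using j by auto
    have "\<mu> (3*j-3) = - \<nu> (3*j-3)" using a ij inb unfolding face_flip_def by simp
    then show "x = y" using one one' ij by simp
  qed
qed

theorem theorem3p2:
  fixes n :: nat
  assumes "n \<ge> 2"
  shows "real (card (OFG_edges n)) = 8 * real (n + 1) * (3::real) powi (int n - 3)"
proof -
  have c: "3 * card (OFG_edges n) = 8 * (n+1) * 3^(n-2)"
    unfolding edges_eq card_image[OF inj_edges[OF assms]] using card_Dp[OF assms] .
  have e: "int n - 3 = int (n-2) - 1" using assms by simp
  have p1: "(3::real) powi (int (n-2) - 1) = 3 powi int (n-2) / 3 powi 1"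
    by (rule power_int_diff) simp
  have p2: "(3::real) powi 1 = 3"
    using power_int_of_nat[of "3::real" 1] by simp
  have p: "(3::real) powi (int n - 3) = 3^(n-2) / 3"
    unfolding e p1 p2 power_int_of_nat ..
  have r0: "real (3 * card (OFG_edges n)) = real (8 * (n+1) * 3^(n-2))"
    using c by (rule arg_cong)
  have r: "3 * real (card (OFG_edges n)) = 8 * real (n+1) * 3^(n-2)"
    using r0 by (simp only: of_nat_mult of_nat_power of_nat_numeral)
  have "8 * real (n + 1) * (3::real) powi (int n - 3) = (8 * real (n+1) * 3^(n-2)) / 3"
    unfolding p by (simp only: times_divide_eq_right)
  then show ?thesis using r by linarith
qed

end
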